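(* Let $\rho>0$, $m\in(-\sqrt\rho,\sqrt\rho)$, and $\mu=-\frac m{\rho-m^2}$. Let $I\subset\Lambda$ be an index set of fixed size and $f:\mathbb{R}^{|I|}\to\mathbb{R}$ a bounded $1$-Lipschitz function with respect to $\|\cdot\|_2$. Then \[ \langle f\circ P_I\rangle_{\mathrm{MC}}^{m,\rho;N}=\langle f\circ P_I\rangle_{\mathrm{C}}^{\mu,\rho;N}+O(N^{-1/2}). \]
   Context: $\Lambda$ finite lattice with $N=|\Lambda|$ sites, fields $\phi\in\mathbb{R}^\Lambda$; $P_I$ restricts $\phi$ to the sites of $I$. For $\rho>0$, $|m|<\sqrt\rho$, $\mu_{\mathrm{MC}}^{m,\rho;N}$ is the normalized uniform surface measure on $\{\sum_x\phi_x=mN,\ \sum_x\phi_x^2=\rho N\}$. For $\mu\in\mathbb{R}$, the auxiliary canonical ensemble is $\langle f\rangle_{\mathrm{C}}^{\mu,\rho;N}=\frac{\int_{-\sqrt\rho}^{\sqrt\rho}dm'\,e^{-\mu Nm'}(\rho-m'^2)^{(N-3)/2}\langle f\rangle_{\mathrm{MC}}^{m',\rho;N}}{\int_{-\sqrt\rho}^{\sqrt\rho}dm'\,e^{-\mu Nm'}(\rho-m'^2)^{(N-3)/2}}$. $O(N^{-1/2})$ refers to $N\to\infty$ with a constant independent of $N$. *)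

theory Defs
  imports "HOL-Analysis.Analysis"
begin

text \<open>Sites of the lattice: \<Lambda> = {0..<N}. Fields are functions nat \<Rightarrow> real,
  only the values at sites i < N matter.\<close>

text \<open>Linear parametrisation of the (N-1)-dimensional hyperplane V = {psi. sum psi = 0}
  of R^Lambda by its first N-1 coordinates.\<close>
definition hyp_param :: "nat \<Rightarrow> (nat \<Rightarrow> real) \<Rightarrow> (nat \<Rightarrow> real)" where
  "hyp_param N y = (\<lambda>i. if i < N - 1 then y i
                         else if i = N - 1 then - (\<Sum>j<N - 1. y j) else 0)"

definition field_norm :: "nat \<Rightarrow> (nat \<Rightarrow> real) \<Rightarrow> real" where
  "field_norm N \<phi> = sqrt (\<Sum>i<N. (\<phi> i)\<^sup>2)"

definition param_space :: "nat \<Rightarrow> (nat \<Rightarrow> real) measure" where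
  "param_space N = PiM {..<N - 1} (\<lambda>_. lborel)"

definition param_ball :: "nat \<Rightarrow> (nat \<Rightarrow> real) set" where
  "param_ball N = {y \<in> space (param_space N). field_norm N (hyp_param N y) \<le> 1}"

text \<open>The point of the microcanonical surface
  {sum phi = m N, sum phi^2 = rho N} obtained by radially projecting psi = hyp_param N y.\<close>
definition mc_point :: "nat \<Rightarrow> real \<Rightarrow> real \<Rightarrow> (nat \<Rightarrow> real) \<Rightarrow> (nat \<Rightarrow> real)" where
  "mc_point N m \<rho> y = (\<lambda>i. if i < N then
      m + sqrt (real N * (\<rho> - m\<^sup>2)) * hyp_param N y i / field_norm N (hyp_param N y)
     else 0)"

text \<open>Microcanonical expectation: normalized uniform surface measure on the
  (N-2)-sphere {sum phi = m N, sum phi^2 = rho N}, realised as the cone measure of the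
  round sphere in the hyperplane (which coincides with the normalized surface measure):
  E[F] = (1/vol B) \<integral>_B F(centre + R x/|x|) dx, B the unit ball of V.  Lebesgue measure
  on V is computed through the linear parametrisation hyp_param; the constant Jacobian
  factor cancels in the normalisation.\<close>
definition mc_expect :: "nat \<Rightarrow> real \<Rightarrow> real \<Rightarrow> ((nat \<Rightarrow> real) \<Rightarrow> real) \<Rightarrow> real" where
  "mc_expect N m \<rho> F =
     (LINT y:param_ball N|param_space N. F (mc_point N m \<rho> y))
       / measure (param_space N) (param_ball N)"

definition can_weight :: "nat \<Rightarrow> real \<Rightarrow> real \<Rightarrow> real \<Rightarrow> real" where
  "can_weight N \<mu> \<rho> m' = exp (- \<mu> * real N * m') * (\<rho> - m'\<^sup>2) powr ((real N - 3) / 2)"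

definition can_expect :: "nat \<Rightarrow> real \<Rightarrow> real \<Rightarrow> ((nat \<Rightarrow> real) \<Rightarrow> real) \<Rightarrow> real" where
  "can_expect N \<mu> \<rho> F =
     (LBINT m'=- sqrt \<rho>..sqrt \<rho>. can_weight N \<mu> \<rho> m' * mc_expect N m' \<rho> F)
       / (LBINT m'=- sqrt \<rho>..sqrt \<rho>. can_weight N \<mu> \<rho> m')"

text \<open>Restriction P_I to the sites of I, where I is enumerated by an injective map
  iota from a finite type 'k (|I| = CARD('k)) into the sites.\<close>
definition restrict_to :: "('k::finite \<Rightarrow> nat) \<Rightarrow> (nat \<Rightarrow> real) \<Rightarrow> real ^ 'k" where
  "restrict_to \<iota> \<phi> = (\<chi> j. \<phi> (\<iota> j))"

end

theory Submission
  imports Defs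
begin


definition Tmap :: "nat \<Rightarrow> nat \<Rightarrow> (nat \<Rightarrow> real) \<Rightarrow> (nat \<Rightarrow> real)" where
  "Tmap N i y = y(i := - (\<Sum>j<N - 1. y j))"

lemma Tmap_meas[measurable]:
  assumes "i < N - 1"
  shows "Tmap N i \<in> measurable (param_space N) (param_space N)"
  unfolding param_space_def
proof -
  have "(\<lambda>\<omega> j. Tmap N i \<omega> j) \<in> measurable (Pi\<^sub>M {..<N - 1} (\<lambda>_. lborel)) (Pi\<^sub>M {..<N - 1} (\<lambda>_. lborel))"
  proof (rule measurable_PiM_single')
    fix j assume "j \<in> {..<N-1}"
    then have "(\<lambda>\<omega>. Tmap N i \<omega> j) \<in> borel_measurable (Pi\<^sub>M {..<N - 1} (\<lambda>_. lborel))"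
      unfolding Tmap_def by (cases "j = i") (auto intro!: borel_measurable_sum measurable_component_singleton)
    then show "(\<lambda>\<omega>. Tmap N i \<omega> j) \<in> measurable (Pi\<^sub>M {..<N - 1} (\<lambda>_. lborel)) lborel"
      by simp
  next
    show "(\<lambda>\<omega> j. Tmap N i \<omega> j) \<in> space (Pi\<^sub>M {..<N - 1} (\<lambda>_. lborel)) \<rightarrow> (\<Pi>\<^sub>E j\<in>{..<N - 1}. space lborel)"
      using assms by (auto simp: Tmap_def space_PiM PiE_def extensional_def)
  qed
  then show "Tmap N i \<in> measurable (Pi\<^sub>M {..<N - 1} (\<lambda>_. lborel)) (Pi\<^sub>M {..<N - 1} (\<lambda>_. lborel))" by simp
qed

lemma Tmap_invariant:
  assumes i: "i < N - 1" and h[measurable]: "h \<in> borel_measurable (param_space N)"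
  shows "(\<integral>\<^sup>+y. h (Tmap N i y) \<partial>param_space N) = (\<integral>\<^sup>+y. h y \<partial>param_space N)"
proof -
  interpret product_sigma_finite "\<lambda>_. lborel :: real measure" by standard
  define J where "J = {..<N - 1} - {i}"
  have IJ: "{..<N - 1} = insert i J" using i by (auto simp: J_def)
  have fJ: "finite J" "i \<notin> J" by (auto simp: J_def)
  have hm: "h \<in> borel_measurable (Pi\<^sub>M (insert i J) (\<lambda>_. lborel))"
    using h unfolding param_space_def IJ by assumption
  have hTm: "(\<lambda>y. h (Tmap N i y)) \<in> borel_measurable (Pi\<^sub>M (insert i J) (\<lambda>_. lborel))"
    using measurable_comp[OF Tmap_meas[OF i] h] unfolding param_space_def IJ by (simp add: o_def)
  have inner: "(\<integral>\<^sup>+t. h (Tmap N i (x(i := t))) \<partial>lborel) = (\<integral>\<^sup>+t. h (x(i := t)) \<partial>lborel)"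
    if x: "x \<in> space (Pi\<^sub>M J (\<lambda>_. lborel))" for x
  proof -
    define c where "c = (\<Sum>j\<in>J. x j)"
    have sumeq: "(\<Sum>j<N - 1. (x(i := t)) j) = t + c" for t
      unfolding IJ c_def using fJ by (auto simp: sum.insert_if intro!: sum.cong)
    have T: "Tmap N i (x(i := t)) = x(i := - c + (-1) * t)" for t
      unfolding Tmap_def sumeq by (simp add: fun_eq_iff)
    have fm: "(\<lambda>t. h (x(i := t))) \<in> borel_measurable borel"
    proof -
      have "(\<lambda>t. x(i := t)) \<in> measurable lborel (Pi\<^sub>M (insert i J) (\<lambda>_. lborel))"
        using measurable_component_update[OF x fJ(2)] by simp
      from measurable_comp[OF this hm] have "(\<lambda>t. h (x(i := t))) \<in> borel_measurable lborel"
        by (simp add: o_def)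
      then show ?thesis by simp
    qed
    show ?thesis
      unfolding T using nn_integral_real_affine[OF fm, of "-1" "- c"] by simp
  qed
  have "(\<integral>\<^sup>+y. h (Tmap N i y) \<partial>param_space N)
      = (\<integral>\<^sup>+x. (\<integral>\<^sup>+t. h (Tmap N i (x(i := t))) \<partial>lborel) \<partial>Pi\<^sub>M J (\<lambda>_. lborel))"
    unfolding param_space_def IJ by (rule product_nn_integral_insert[OF fJ hTm])
  also have "\<dots> = (\<integral>\<^sup>+x. (\<integral>\<^sup>+t. h (x(i := t)) \<partial>lborel) \<partial>Pi\<^sub>M J (\<lambda>_. lborel))"
    by (rule nn_integral_cong) (use inner in auto)
  also have "\<dots> = (\<integral>\<^sup>+y. h y \<partial>param_space N)"
    unfolding param_space_def IJ by (rule product_nn_integral_insert[OF fJ hm, symmetric])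
  finally show ?thesis .
qed


lemma meas_hp[measurable]: "(\<lambda>y. hyp_param N y i) \<in> borel_measurable (param_space N)"
  unfolding hyp_param_def param_space_def
  by (cases "i < N - 1") (auto intro!: borel_measurable_sum measurable_component_singleton)

lemma meas_fn[measurable]: "(\<lambda>y. field_norm N (hyp_param N y)) \<in> borel_measurable (param_space N)"
  unfolding field_norm_def by measurable

lemma ball_sets[measurable]: "param_ball N \<in> sets (param_space N)"
  unfolding param_ball_def by measurable

definition uu :: "nat \<Rightarrow> (nat \<Rightarrow> real) \<Rightarrow> nat \<Rightarrow> real" where
  "uu N y j = hyp_param N y j / field_norm N (hyp_param N y)"

lemma meas_uu[measurable]: "(\<lambda>y. uu N y j) \<in> borel_measurable (param_space N)"
  unfolding uu_def by measurable

lemma intB: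
  fixes c :: real
  assumes "emeasure (param_space N) (param_ball N) < \<infinity>" "g \<in> borel_measurable (param_space N)"
    "\<And>y. y \<in> param_ball N \<Longrightarrow> \<bar>g y\<bar> \<le> c"
  shows "integrable (param_space N) (\<lambda>y. indicator (param_ball N) y * g y)"
  by (rule integrableI_bounded_set[where A="param_ball N" and B=c]) (use assms in auto)

lemma hp_T:
  assumes "i < N - 1"
  shows "hyp_param N (Tmap N i y) = (\<lambda>j. if j = i then hyp_param N y (N - 1)
           else if j = N - 1 then hyp_param N y i else hyp_param N y j)"
proof -
  have "(\<Sum>j<N - 1. Tmap N i y j) = - y i"
  proof -
    have r: "sum f {..<N-1} = f i + sum f ({..<N-1} - {i})" for f :: "nat \<Rightarrow> real"
      using assms by (intro sum.remove) auto
    have "sum (Tmap N i y) ({..<N-1} - {i}) = sum y ({..<N-1} - {i})"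
      unfolding Tmap_def by (intro sum.cong) auto
    moreover have "Tmap N i y i = - sum y {..<N-1}" by (simp add: Tmap_def)
    ultimately show ?thesis using r[of "Tmap N i y"] r[of y] by linarith
  qed
  then show ?thesis using assms
    by (auto simp: fun_eq_iff hyp_param_def Tmap_def)
qed

lemma fn_T:
  assumes "i < N - 1"
  shows "field_norm N (hyp_param N (Tmap N i y)) = field_norm N (hyp_param N y)"
proof -
  define s where "s j = (if j = i then N - 1 else if j = N - 1 then i else j)" for j
  have "(\<Sum>j<N. (hyp_param N (Tmap N i y) j)\<^sup>2) = (\<Sum>j<N. (hyp_param N y (s j))\<^sup>2)"
    unfolding hp_T[OF assms] s_def by (intro sum.cong) auto
  also have "\<dots> = (\<Sum>j<N. (hyp_param N y j)\<^sup>2)"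
    by (rule sum.reindex_bij_witness[of _ s s]) (use assms in \<open>auto simp: s_def\<close>)
  finally show ?thesis unfolding field_norm_def by simp
qed

lemma uu_sq_sum: "(\<Sum>j<N. (uu N y j)\<^sup>2) \<le> 1"
proof -
  define S where "S = (\<Sum>j<N. (hyp_param N y j)\<^sup>2)"
  have S0: "S \<ge> 0" unfolding S_def by (intro sum_nonneg) auto
  have "(\<Sum>j<N. (uu N y j)\<^sup>2) = S / (sqrt S)\<^sup>2"
    unfolding uu_def field_norm_def S_def[symmetric] by (simp add: power_divide sum_divide_distrib S_def)
  also have "\<dots> \<le> 1" using S0 by (cases "S = 0") auto
  finally show ?thesis .
qed

lemma uu_bound: "j < N \<Longrightarrow> \<bar>uu N y j\<bar> \<le> 1"
proof -
  assume j: "j < N"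
  have "(uu N y j)\<^sup>2 \<le> (\<Sum>j<N. (uu N y j)\<^sup>2)"
    using j by (intro member_le_sum) auto
  also have "\<dots> \<le> 1" by (rule uu_sq_sum)
  finally show ?thesis by (simp add: abs_square_le_1)
qed


lemma Tmap_ball:
  assumes i: "i < N - 1" and y: "y \<in> space (param_space N)"
  shows "(Tmap N i y \<in> param_ball N) = (y \<in> param_ball N)"
  using measurable_space[OF Tmap_meas[OF i] y] y fn_T[OF i, of y]
  unfolding param_ball_def by auto

lemma uu_T:
  assumes i: "i < N - 1"
  shows "uu N (Tmap N i y) (N - 1) = uu N y i"
proof -
  have "hyp_param N (Tmap N i y) (N - 1) = hyp_param N y i" using hp_T[OF i] i by simp
  then show ?thesis unfolding uu_def fn_T[OF i] by simp
qed

lemma moment: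
  assumes fin: "emeasure (param_space N) (param_ball N) < \<infinity>" and j: "j < N"
  shows "integral\<^sup>L (param_space N) (\<lambda>y. indicator (param_ball N) y * (uu N y j)\<^sup>2)
          \<le> measure (param_space N) (param_ball N) / N"
proof -
  define M where "M j = integral\<^sup>L (param_space N) (\<lambda>y. indicator (param_ball N) y * (uu N y j)\<^sup>2)" for j
  have M_nn: "M j = enn2real (\<integral>\<^sup>+y. ennreal (indicator (param_ball N) y * (uu N y j)\<^sup>2) \<partial>param_space N)" for j
    unfolding M_def by (rule integral_eq_nn_integral) auto
  have eq: "M i = M (N - 1)" if i: "i < N - 1" for i
  proof -
    have "(\<integral>\<^sup>+y. ennreal (indicator (param_ball N) y * (uu N y i)\<^sup>2) \<partial>param_space N)
        = (\<integral>\<^sup>+y. ennreal (indicator (param_ball N) (Tmap N i y) * (uu N (Tmap N i y) (N - 1))\<^sup>2) \<partial>param_space N)"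
      by (rule nn_integral_cong) (simp add: uu_T[OF i, simplified] Tmap_ball[OF i] indicator_def)
    also have "\<dots> = (\<integral>\<^sup>+y. ennreal (indicator (param_ball N) y * (uu N y (N - 1))\<^sup>2) \<partial>param_space N)"
      by (rule Tmap_invariant[OF i, where h="\<lambda>y. ennreal (indicator (param_ball N) y * (uu N y (N - 1))\<^sup>2)"]) auto
    finally show ?thesis unfolding M_nn by simp
  qed
  have intg: "integrable (param_space N) (\<lambda>y. indicator (param_ball N) y * (uu N y j)\<^sup>2)" if "j < N" for j
    by (rule intB[OF fin, where c=1]) (use uu_bound[OF that] in \<open>auto simp: abs_square_le_1\<close>)
  have "(\<Sum>j<N. M j) = integral\<^sup>L (param_space N) (\<lambda>y. \<Sum>j<N. indicator (param_ball N) y * (uu N y j)\<^sup>2)"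
    unfolding M_def by (rule Bochner_Integration.integral_sum[symmetric, where f="\<lambda>j y. indicator (param_ball N) y * (uu N y j)\<^sup>2"]) (use intg in auto)
  also have "\<dots> \<le> integral\<^sup>L (param_space N) (indicator (param_ball N))"
  proof (rule integral_mono)
    show "integrable (param_space N) (\<lambda>y. \<Sum>j<N. indicator (param_ball N) y * (uu N y j)\<^sup>2)"
      using intg by (intro Bochner_Integration.integrable_sum) auto
    show "integrable (param_space N) (indicator (param_ball N) :: _ \<Rightarrow> real)"
      using fin by (intro integrable_real_indicator) auto
    fix y
    have "(\<Sum>j<N. indicator (param_ball N) y * (uu N y j)\<^sup>2) = indicator (param_ball N) y * (\<Sum>j<N. (uu N y j)\<^sup>2)"
      by (simp add: sum_distrib_left)
    also have "\<dots> \<le> indicator (param_ball N) y * 1"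
      by (intro mult_left_mono uu_sq_sum) auto
    finally show "(\<Sum>j<N. indicator (param_ball N) y * (uu N y j)\<^sup>2) \<le> (indicator (param_ball N) y :: real)" by simp
  qed
  also have "\<dots> = measure (param_space N) (param_ball N)"
    using sets.sets_into_space[OF ball_sets] by (simp add: Int_absorb2)
  finally have S: "(\<Sum>j<N. M j) \<le> measure (param_space N) (param_ball N)" .
  have N1: "N - 1 < N" using j by auto
  have "(\<Sum>j<N. M j) = (\<Sum>j<N. M (N - 1))"
    by (intro sum.cong refl) (metis eq less_antisym Suc_pred' j gr_implies_not0 lessThan_iff not_less_eq)
  then have "real N * M (N - 1) \<le> measure (param_space N) (param_ball N)" using S by simp
  moreover have "M j = M (N - 1)"
  proof (cases "j < N - 1")
    case True then show ?thesis using eq by auto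
  next
    case False then have "j = N - 1" using j by linarith
    then show ?thesis by simp
  qed
  ultimately show ?thesis using j unfolding M_def[symmetric] by (simp add: field_simps)
qed


lemma aux_pw:
  fixes s t :: real assumes s: "s > 0"
  shows "\<bar>t\<bar> \<le> s / 2 * (t\<^sup>2 + 1 / s\<^sup>2)"
proof -
  have "s / 2 * (t\<^sup>2 + 1 / s\<^sup>2) - \<bar>t\<bar> = (s * \<bar>t\<bar> - 1)\<^sup>2 / (2 * s)"
    using s by (simp add: field_simps power2_eq_square)
  also have "\<dots> \<ge> 0" using s by simp
  finally show ?thesis by simp
qed

lemma aux_div:
  fixes s b :: real assumes s: "s > 0"
  shows "s / 2 * (b / s\<^sup>2) + s / (2 * s\<^sup>2) * b = b / s"
  using s by (simp add: field_simps power2_eq_square)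

lemma abs_moment:
  assumes fin: "emeasure (param_space N) (param_ball N) < \<infinity>" and j: "j < N"
  shows "integral\<^sup>L (param_space N) (\<lambda>y. indicator (param_ball N) y * \<bar>uu N y j\<bar>)
          \<le> measure (param_space N) (param_ball N) / sqrt N"
proof -
  let ?P = "param_space N" and ?B = "param_ball N"
  have N: "real N > 0" using j by auto
  have sN: "sqrt (real N) > 0" using N by auto
  have sNsq: "(sqrt (real N))\<^sup>2 = real N" by simp
  have pw: "\<bar>t\<bar> \<le> sqrt N / 2 * (t\<^sup>2 + 1 / N)" for t :: real
    using aux_pw[OF sN, of t] unfolding sNsq .
  have i1: "integrable ?P (\<lambda>y. indicator ?B y * \<bar>uu N y j\<bar>)"
    by (rule intB[OF fin, where c=1]) (use uu_bound[OF j] in auto)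
  have i2: "integrable ?P (\<lambda>y. indicator ?B y * (uu N y j)\<^sup>2)"
    by (rule intB[OF fin, where c=1]) (use uu_bound[OF j] in \<open>auto simp: abs_square_le_1\<close>)
  have i3: "integrable ?P (indicator ?B :: _ \<Rightarrow> real)"
    using fin by (intro integrable_real_indicator) auto
  have "integral\<^sup>L ?P (\<lambda>y. indicator ?B y * \<bar>uu N y j\<bar>)
      \<le> integral\<^sup>L ?P (\<lambda>y. sqrt N / 2 * (indicator ?B y * (uu N y j)\<^sup>2) + sqrt N / (2 * N) * indicator ?B y)"
  proof (rule integral_mono[OF i1])
    show "integrable ?P (\<lambda>y. sqrt N / 2 * (indicator ?B y * (uu N y j)\<^sup>2) + sqrt N / (2 * N) * indicator ?B y)"
      using i2 i3 by auto
    fix y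
    show "indicator ?B y * \<bar>uu N y j\<bar> \<le> sqrt N / 2 * (indicator ?B y * (uu N y j)\<^sup>2) + sqrt N / (2 * N) * indicator ?B y"
      using pw[of "uu N y j"] by (auto simp: indicator_def field_simps)
  qed
  also have "\<dots> = sqrt N / 2 * integral\<^sup>L ?P (\<lambda>y. indicator ?B y * (uu N y j)\<^sup>2) + sqrt N / (2 * N) * measure ?P ?B"
    using i2 i3 sets.sets_into_space[OF ball_sets] by (simp add: Int_absorb2)
  also have "\<dots> \<le> sqrt N / 2 * (measure ?P ?B / N) + sqrt N / (2 * N) * measure ?P ?B"
    using moment[OF fin j] sN by (intro add_right_mono mult_left_mono) auto
  also have "\<dots> = measure ?P ?B / sqrt N"
    using aux_div[OF sN, of "measure ?P ?B"] unfolding sNsq by simp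
  finally show ?thesis .
qed

lemma mc_point_eq: "i < N \<Longrightarrow> mc_point N m \<rho> y i = m + sqrt N * sqrt (\<rho> - m\<^sup>2) * uu N y i"
  unfolding mc_point_def uu_def by (simp add: real_sqrt_mult)


lemma meas_mc[measurable]: "(\<lambda>y. mc_point N m \<rho> y i) \<in> borel_measurable (param_space N)"
  unfolding mc_point_def field_norm_def by measurable

lemma meas_restr:
  fixes \<iota> :: "'k::finite \<Rightarrow> nat"
  shows "(\<lambda>y. restrict_to \<iota> (mc_point N m \<rho> y)) \<in> borel_measurable (param_space N)"
  unfolding restrict_to_def
  apply (subst borel_measurable_euclidean_space)
  apply (auto simp: Basis_vec_def inner_axis)
  done

lemma pw_lip:
  fixes f :: "real ^ 'k::finite \<Rightarrow> real" and \<iota> :: "'k \<Rightarrow> nat" and m1 m2 \<rho> :: real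
  assumes lip: "1-lipschitz_on UNIV f" and \<iota>: "\<forall>j. \<iota> j < N"
  shows "\<bar>f (restrict_to \<iota> (mc_point N m1 \<rho> y)) - f (restrict_to \<iota> (mc_point N m2 \<rho> y))\<bar>
     \<le> CARD('k) * \<bar>m1 - m2\<bar> + sqrt N * \<bar>sqrt (\<rho> - m1\<^sup>2) - sqrt (\<rho> - m2\<^sup>2)\<bar> * (\<Sum>j\<in>UNIV. \<bar>uu N y (\<iota> j)\<bar>)"
proof -
  let ?v1 = "restrict_to \<iota> (mc_point N m1 \<rho> y)" and ?v2 = "restrict_to \<iota> (mc_point N m2 \<rho> y)"
  have "\<bar>f ?v1 - f ?v2\<bar> \<le> 1 * dist ?v1 ?v2"
    using lipschitz_onD[OF lip, of ?v1 ?v2] by (simp add: dist_real_def)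
  also have "\<dots> = norm (?v1 - ?v2)" by (simp add: dist_norm)
  also have "\<dots> \<le> (\<Sum>j\<in>UNIV. \<bar>(?v1 - ?v2) $ j\<bar>)" by (rule norm_le_l1_cart)
  also have "\<dots> \<le> (\<Sum>j\<in>UNIV. \<bar>m1 - m2\<bar> + sqrt N * \<bar>sqrt (\<rho> - m1\<^sup>2) - sqrt (\<rho> - m2\<^sup>2)\<bar> * \<bar>uu N y (\<iota> j)\<bar>)"
  proof (rule sum_mono)
    fix j
    have "(?v1 - ?v2) $ j = (m1 - m2) + sqrt N * (sqrt (\<rho> - m1\<^sup>2) - sqrt (\<rho> - m2\<^sup>2)) * uu N y (\<iota> j)"
      using \<iota> by (simp add: restrict_to_def mc_point_eq algebra_simps)
    then show "\<bar>(?v1 - ?v2) $ j\<bar> \<le> \<bar>m1 - m2\<bar> + sqrt N * \<bar>sqrt (\<rho> - m1\<^sup>2) - sqrt (\<rho> - m2\<^sup>2)\<bar> * \<bar>uu N y (\<iota> j)\<bar>"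
      by (simp add: abs_mult order.trans[OF abs_triangle_ineq])
  qed
  also have "\<dots> = CARD('k) * \<bar>m1 - m2\<bar> + sqrt N * \<bar>sqrt (\<rho> - m1\<^sup>2) - sqrt (\<rho> - m2\<^sup>2)\<bar> * (\<Sum>j\<in>UNIV. \<bar>uu N y (\<iota> j)\<bar>)"
    by (simp add: sum.distrib sum_distrib_left)
  finally show ?thesis .
qed


lemma mc_lip:
  fixes f :: "real ^ 'k::finite \<Rightarrow> real" and \<iota> :: "'k \<Rightarrow> nat" and m1 m2 \<rho> Bf :: real
  assumes bnd: "\<And>v. \<bar>f v\<bar> \<le> Bf" and lip: "1-lipschitz_on UNIV f" and \<iota>: "\<forall>j. \<iota> j < N"
  shows "\<bar>mc_expect N m1 \<rho> (f \<circ> restrict_to \<iota>) - mc_expect N m2 \<rho> (f \<circ> restrict_to \<iota>)\<bar>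
     \<le> CARD('k) * \<bar>m1 - m2\<bar> + CARD('k) * \<bar>sqrt (\<rho> - m1\<^sup>2) - sqrt (\<rho> - m2\<^sup>2)\<bar>"
proof (cases "measure (param_space N) (param_ball N) = 0")
  case True
  then show ?thesis by (simp add: mc_expect_def)
next
  case False
  let ?P = "param_space N" and ?B = "param_ball N" and ?k = "real CARD('k)"
  define d where "d = \<bar>m1 - m2\<bar>"
  define D where "D = \<bar>sqrt (\<rho> - m1\<^sup>2) - sqrt (\<rho> - m2\<^sup>2)\<bar>"
  have fin: "emeasure ?P ?B < \<infinity>"
    using False measure_zero_top[of ?P ?B] by (metis infinity_ennreal_def less_top)
  have Bpos: "measure ?P ?B > 0" using False by (simp add: zero_less_measure_iff)
  have N: "N > 0" using \<iota> by (metis gr0I not_less0)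
  have fm: "f \<in> borel_measurable borel"
    by (rule borel_measurable_continuous_onI) (rule lipschitz_on_continuous_on[OF lip])
  have Fm: "(\<lambda>y. f (restrict_to \<iota> (mc_point N m \<rho> y))) \<in> borel_measurable ?P" for m
    using measurable_comp[OF meas_restr fm] by (simp add: o_def)
  have iF: "integrable ?P (\<lambda>y. indicator ?B y * f (restrict_to \<iota> (mc_point N m \<rho> y)))" for m
    by (rule intB[OF fin Fm, where c=Bf]) (use bnd in auto)
  have mce: "mc_expect N m \<rho> (f \<circ> restrict_to \<iota>)
      = integral\<^sup>L ?P (\<lambda>y. indicator ?B y * f (restrict_to \<iota> (mc_point N m \<rho> y))) / measure ?P ?B" for m
    unfolding mc_expect_def set_lebesgue_integral_def by simp
  have iU: "integrable ?P (\<lambda>y. indicator ?B y * \<bar>uu N y j\<bar>)" if "j < N" for j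
    by (rule intB[OF fin, where c=1]) (use uu_bound[OF that] in auto)
  have i3: "integrable ?P (indicator ?B :: _ \<Rightarrow> real)"
    using fin by (intro integrable_real_indicator) auto
  define G where "G y = ?k * d * indicator ?B y + sqrt N * D * (\<Sum>j\<in>UNIV. indicator ?B y * \<bar>uu N y (\<iota> j)\<bar>)" for y
  have iG: "integrable ?P G"
    unfolding G_def using i3 iU \<iota> by (intro Bochner_Integration.integrable_add integrable_mult_right Bochner_Integration.integrable_sum) auto
  define H where "H y = indicator ?B y * f (restrict_to \<iota> (mc_point N m1 \<rho> y)) - indicator ?B y * f (restrict_to \<iota> (mc_point N m2 \<rho> y))" for y
  have iH: "integrable ?P H" unfolding H_def using iF by auto
  have HG: "\<bar>H y\<bar> \<le> G y" for y
  proof (cases "y \<in> ?B")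
    case True
    then show ?thesis using pw_lip[OF lip \<iota>, of m1 \<rho> y m2]
      by (simp add: H_def G_def d_def D_def sum_distrib_left)
  next
    case False
    then show ?thesis by (simp add: H_def G_def)
  qed
  have "\<bar>integral\<^sup>L ?P H\<bar> \<le> integral\<^sup>L ?P G"
  proof -
    have "integral\<^sup>L ?P H \<le> integral\<^sup>L ?P G"
      by (rule integral_mono[OF iH iG]) (use HG in \<open>auto simp: abs_le_iff\<close>)
    moreover have "integral\<^sup>L ?P (\<lambda>y. - H y) \<le> integral\<^sup>L ?P G"
      by (rule integral_mono[OF _ iG]) (use HG iH in \<open>auto simp: abs_le_iff\<close>)
    ultimately show ?thesis by auto
  qed
  also have "integral\<^sup>L ?P G = ?k * d * measure ?P ?B + sqrt N * D * (\<Sum>j\<in>UNIV. integral\<^sup>L ?P (\<lambda>y. indicator ?B y * \<bar>uu N y (\<iota> j)\<bar>))"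
  proof -
    have iS: "integrable ?P (\<lambda>y. \<Sum>j\<in>UNIV. indicator ?B y * \<bar>uu N y (\<iota> j)\<bar>)"
      by (rule Bochner_Integration.integrable_sum) (use iU \<iota> in auto)
    have "integral\<^sup>L ?P G = integral\<^sup>L ?P (\<lambda>y. ?k * d * indicator ?B y) + integral\<^sup>L ?P (\<lambda>y. sqrt N * D * (\<Sum>j\<in>UNIV. indicator ?B y * \<bar>uu N y (\<iota> j)\<bar>))"
      unfolding G_def by (rule Bochner_Integration.integral_add) (use i3 iS in auto)
    also have "\<dots> = ?k * d * integral\<^sup>L ?P (indicator ?B) + sqrt N * D * integral\<^sup>L ?P (\<lambda>y. \<Sum>j\<in>UNIV. indicator ?B y * \<bar>uu N y (\<iota> j)\<bar>)"
      by (simp only: integral_mult_right_zero)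
    also have "integral\<^sup>L ?P (\<lambda>y. \<Sum>j\<in>UNIV. indicator ?B y * \<bar>uu N y (\<iota> j)\<bar>) = (\<Sum>j\<in>UNIV. integral\<^sup>L ?P (\<lambda>y. indicator ?B y * \<bar>uu N y (\<iota> j)\<bar>))"
      by (rule Bochner_Integration.integral_sum) (use iU \<iota> in auto)
    also have "integral\<^sup>L ?P (indicator ?B) = measure ?P ?B"
      using sets.sets_into_space[OF ball_sets] by (simp add: Int_absorb2)
    finally show ?thesis .
  qed
  also have "\<dots> \<le> ?k * d * measure ?P ?B + sqrt N * D * (\<Sum>j\<in>(UNIV::'k set). measure ?P ?B / sqrt N)"
  proof -
    have "(\<Sum>j\<in>UNIV. integral\<^sup>L ?P (\<lambda>y. indicator ?B y * \<bar>uu N y (\<iota> j)\<bar>)) \<le> (\<Sum>j\<in>(UNIV::'k set). measure ?P ?B / sqrt N)"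
      by (rule sum_mono) (use abs_moment[OF fin] \<iota> in auto)
    then show ?thesis by (intro add_left_mono mult_left_mono) (auto simp: D_def)
  qed
  also have "\<dots> = (?k * d + ?k * D) * measure ?P ?B"
    using N by (simp add: field_simps)
  finally have "\<bar>integral\<^sup>L ?P H\<bar> \<le> (?k * d + ?k * D) * measure ?P ?B" .
  moreover have "mc_expect N m1 \<rho> (f \<circ> restrict_to \<iota>) - mc_expect N m2 \<rho> (f \<circ> restrict_to \<iota>) = integral\<^sup>L ?P H / measure ?P ?B"
    unfolding mce H_def using iF by (simp add: diff_divide_distrib)
  ultimately show ?thesis using Bpos by (simp add: d_def D_def abs_divide pos_divide_le_eq)
qed




lemma lin_aux:
  fixes A B C r h :: real
  shows "A \<le> B + C \<Longrightarrow> B \<le> h \<Longrightarrow> h \<le> (r - C) / 2 \<Longrightarrow> C < r \<Longrightarrow> A < r"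
  by (simp add: field_simps)

lemma ftc_piece:
  fixes c m0 lo hi :: real
  assumes c: "c > 0" and le: "lo \<le> hi"
    and F: "\<And>x. (F has_real_derivative f x) (at x)"
  shows "(f has_integral (F hi - F lo)) {lo..hi}"
  by (rule fundamental_theorem_of_calculus[OF le])
     (auto simp: has_real_derivative_iff_has_vector_derivative[symmetric] intro!: has_field_derivative_at_within F)

lemma gauss_tail:
  fixes c m0 lo hi :: real
  assumes c: "c > 0" and l: "lo \<le> m0" and h: "m0 \<le> hi"
  shows "integral {lo..hi} (\<lambda>x. \<bar>x - m0\<bar> * exp (- c * (x - m0)\<^sup>2)) \<le> 1 / c"
proof -
  let ?g = "\<lambda>x. \<bar>x - m0\<bar> * exp (- c * (x - m0)\<^sup>2)"
  have cont: "continuous_on S ?g" for S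
    by (intro continuous_intros)
  have d1: "((\<lambda>x. - exp (- c * (x - m0)\<^sup>2) / (2 * c)) has_real_derivative (x - m0) * exp (- c * (x - m0)\<^sup>2)) (at x)" for x
    using c by (auto intro!: derivative_eq_intros simp: field_simps power2_eq_square)
  have d2: "((\<lambda>x. exp (- c * (x - m0)\<^sup>2) / (2 * c)) has_real_derivative (m0 - x) * exp (- c * (x - m0)\<^sup>2)) (at x)" for x
    using c by (auto intro!: derivative_eq_intros simp: field_simps power2_eq_square)
  have I1: "integral {m0..hi} ?g = - exp (- c * (hi - m0)\<^sup>2) / (2 * c) - (- exp (- c * (m0 - m0)\<^sup>2) / (2 * c))"
  proof -
    have "integral {m0..hi} ?g = integral {m0..hi} (\<lambda>x. (x - m0) * exp (- c * (x - m0)\<^sup>2))"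
      by (rule integral_cong) auto
    also have "\<dots> = - exp (- c * (hi - m0)\<^sup>2) / (2 * c) - (- exp (- c * (m0 - m0)\<^sup>2) / (2 * c))"
      by (rule integral_unique[OF ftc_piece[OF c h d1]])
    finally show ?thesis .
  qed
  have I2: "integral {lo..m0} ?g = exp (- c * (m0 - m0)\<^sup>2) / (2 * c) - exp (- c * (lo - m0)\<^sup>2) / (2 * c)"
  proof -
    have "integral {lo..m0} ?g = integral {lo..m0} (\<lambda>x. (m0 - x) * exp (- c * (x - m0)\<^sup>2))"
      by (rule integral_cong) auto
    also have "\<dots> = exp (- c * (m0 - m0)\<^sup>2) / (2 * c) - exp (- c * (lo - m0)\<^sup>2) / (2 * c)"
      by (rule integral_unique[OF ftc_piece[OF c l d2]])
    finally show ?thesis .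
  qed
  have "integral {lo..hi} ?g = integral {lo..m0} ?g + integral {m0..hi} ?g"
    by (rule Henstock_Kurzweil_Integration.integral_combine[symmetric]) (use l h cont in \<open>auto intro!: integrable_continuous_interval\<close>)
  also have "\<dots> \<le> 1 / c"
    unfolding I1 I2 using c by (simp add: field_simps add_pos_pos)
  finally show ?thesis .
qed


context
  fixes \<rho> m \<mu> :: real
  assumes rho: "\<rho> > 0" and mr: "\<bar>m\<bar> < sqrt \<rho>" and mu: "\<mu> = - m / (\<rho> - m\<^sup>2)"
begin

lemma a2_pos: "\<rho> - m\<^sup>2 > 0"
proof -
  have "m\<^sup>2 < (sqrt \<rho>)\<^sup>2" using mr by (metis abs_ge_zero power2_abs power_strict_mono zero_less_numeral)
  then show ?thesis using rho by simp
qed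

definition Phi :: "real \<Rightarrow> real \<Rightarrow> real" where
  "Phi n x = - \<mu> * (n + 3) * (x - m) + n / 2 * ln ((\<rho> - x\<^sup>2) / (\<rho> - m\<^sup>2))"

lemma w_repr:
  assumes x: "x\<^sup>2 < \<rho>" and N: "N \<ge> 3"
  shows "can_weight N \<mu> \<rho> x = can_weight N \<mu> \<rho> m * exp (Phi (real N - 3) x)"
proof -
  have p1: "\<rho> - x\<^sup>2 > 0" using x by simp
  have p2: "\<rho> - m\<^sup>2 > 0" using a2_pos .
  have L: "can_weight N \<mu> \<rho> y = exp (- \<mu> * real N * y + (real N - 3) / 2 * ln (\<rho> - y\<^sup>2))"
    if "\<rho> - y\<^sup>2 > 0" for y
    using that by (simp add: can_weight_def powr_def exp_add[symmetric] algebra_simps)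
  have "can_weight N \<mu> \<rho> m * exp (Phi (real N - 3) x)
      = exp ((- \<mu> * real N * m + (real N - 3) / 2 * ln (\<rho> - m\<^sup>2)) + Phi (real N - 3) x)"
    by (simp add: L[OF p2] exp_add)
  also have "(- \<mu> * real N * m + (real N - 3) / 2 * ln (\<rho> - m\<^sup>2)) + Phi (real N - 3) x
      = - \<mu> * real N * x + (real N - 3) / 2 * ln (\<rho> - x\<^sup>2)"
    unfolding Phi_def using p1 p2 by (simp add: ln_div algebra_simps)
  finally show ?thesis using L[OF p1] by simp
qed

lemma Phi_ident:
  assumes x: "x\<^sup>2 < \<rho>"
  shows "Phi n x = n / 2 * ((x\<^sup>2 - m\<^sup>2) / (\<rho> - m\<^sup>2) + ln (1 - (x\<^sup>2 - m\<^sup>2) / (\<rho> - m\<^sup>2)))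
           - n * (x - m)\<^sup>2 / (2 * (\<rho> - m\<^sup>2)) + 3 * m * (x - m) / (\<rho> - m\<^sup>2)"
proof -
  have p2: "\<rho> - m\<^sup>2 > 0" using a2_pos .
  have e: "1 - (x\<^sup>2 - m\<^sup>2) / (\<rho> - m\<^sup>2) = (\<rho> - x\<^sup>2) / (\<rho> - m\<^sup>2)"
    using p2 by (simp add: field_simps)
  have alg: "- (- m / a) * (n + 3) * (x - m) + n / 2 * L = n / 2 * ((x\<^sup>2 - m\<^sup>2) / a + L) - n * (x - m)\<^sup>2 / (2 * a) + 3 * m * (x - m) / a"
    if "a \<noteq> 0" for a L :: real
    using that by (simp add: field_simps power2_eq_square)
  show ?thesis unfolding Phi_def e mu[symmetric] using alg[of "\<rho> - m\<^sup>2" "ln ((\<rho> - x\<^sup>2) / (\<rho> - m\<^sup>2))"] p2 mu by simp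
qed

lemma abs_le_r: "x\<^sup>2 \<le> \<rho> \<Longrightarrow> \<bar>x\<bar> \<le> sqrt \<rho>"
  using real_sqrt_le_mono[of "x\<^sup>2" \<rho>] by simp

lemma Phi_upper:
  assumes x: "x\<^sup>2 < \<rho>" and n: "n \<ge> 0"
  shows "Phi n x \<le> - n * (x - m)\<^sup>2 / (2 * (\<rho> - m\<^sup>2)) + 6 * \<rho> / (\<rho> - m\<^sup>2)"
proof -
  have p2: "\<rho> - m\<^sup>2 > 0" using a2_pos .
  define s where "s = (x\<^sup>2 - m\<^sup>2) / (\<rho> - m\<^sup>2)"
  have s1: "1 - s > 0" unfolding s_def using p2 x by (simp add: field_simps)
  have "ln (1 - s) \<le> (1 - s) - 1" by (rule ln_le_minus_one[OF s1])
  then have A: "n / 2 * (s + ln (1 - s)) \<le> 0" using n by (simp add: mult_nonneg_nonpos)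
  have xr: "\<bar>x\<bar> \<le> sqrt \<rho>" using abs_le_r x by simp
  have mr': "\<bar>m\<bar> \<le> sqrt \<rho>" using mr by simp
  have "3 * m * (x - m) \<le> 3 * (\<bar>m\<bar> * \<bar>x - m\<bar>)" by (simp add: abs_mult[symmetric])
  also have "\<dots> \<le> 3 * (sqrt \<rho> * (2 * sqrt \<rho>))"
    using xr mr' rho by (intro mult_left_mono mult_mono) auto
  also have "\<dots> = 6 * \<rho>" using rho by simp
  finally have B: "3 * m * (x - m) / (\<rho> - m\<^sup>2) \<le> 6 * \<rho> / (\<rho> - m\<^sup>2)"
    using p2 by (simp add: divide_right_mono)
  show ?thesis using Phi_ident[OF x, of n] A B unfolding s_def by linarith
qed

lemma Phi_lower:
  assumes x: "x\<^sup>2 < \<rho>" and n: "n \<ge> 0" and d: "\<bar>x - m\<bar> \<le> h" and h1: "h \<le> 1"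
    and h2: "h \<le> (\<rho> - m\<^sup>2) / (4 * sqrt \<rho>)" and nh: "n * h\<^sup>2 \<le> 1"
  shows "Phi n x \<ge> - (4 * \<rho> / (\<rho> - m\<^sup>2)\<^sup>2 + 1 / (2 * (\<rho> - m\<^sup>2)) + 3 * sqrt \<rho> / (\<rho> - m\<^sup>2))"
proof -
  have p2: "\<rho> - m\<^sup>2 > 0" using a2_pos .
  define a where "a = \<rho> - m\<^sup>2"
  have a: "a > 0" using p2 a_def by simp
  define s where "s = (x\<^sup>2 - m\<^sup>2) / a"
  have xr: "\<bar>x\<bar> \<le> sqrt \<rho>" using abs_le_r x by simp
  have mr': "\<bar>m\<bar> \<le> sqrt \<rho>" using mr by simp
  have sr: "sqrt \<rho> > 0" using rho by simp
  have xm: "\<bar>x + m\<bar> \<le> 2 * sqrt \<rho>" using xr mr' by linarith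
  have dd: "\<bar>x\<^sup>2 - m\<^sup>2\<bar> = \<bar>x - m\<bar> * \<bar>x + m\<bar>" by (simp add: power2_eq_square abs_mult[symmetric] algebra_simps)
  have "\<bar>x\<^sup>2 - m\<^sup>2\<bar> \<le> h * (2 * sqrt \<rho>)" unfolding dd using d xm by (intro mult_mono) auto
  also have "\<dots> \<le> a / (4 * sqrt \<rho>) * (2 * sqrt \<rho>)" using h2 sr unfolding a_def by (intro mult_right_mono) auto
  also have "\<dots> = a / 2" using sr by simp
  finally have sabs: "\<bar>s\<bar> \<le> 1 / 2" unfolding s_def using a by (simp add: abs_divide field_simps)
  have s1: "1 - s > 0" using sabs by linarith
  have "ln (1 / (1 - s)) \<le> 1 / (1 - s) - 1" by (rule ln_le_minus_one) (use s1 in simp)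
  then have "- ln (1 - s) \<le> s / (1 - s)" using s1 by (simp add: ln_div field_simps)
  then have Q1: "s + ln (1 - s) \<ge> s - s / (1 - s)" by linarith
  have Q2: "s - s / (1 - s) = - (s\<^sup>2 / (1 - s))" using s1 by (simp add: field_simps power2_eq_square)
  have Q3: "s\<^sup>2 / (1 - s) \<le> 2 * s\<^sup>2"
  proof -
    have "s\<^sup>2 / (1 - s) \<le> s\<^sup>2 / (1 / 2)"
      by (rule divide_left_mono) (use sabs s1 in auto)
    then show ?thesis by simp
  qed
  have L1: "s + ln (1 - s) \<ge> - 2 * s\<^sup>2" using Q1 Q2 Q3 by linarith
  have "s\<^sup>2 = (x - m)\<^sup>2 * (x + m)\<^sup>2 / a\<^sup>2" unfolding s_def by (simp add: power2_eq_square field_simps)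
  also have "\<dots> \<le> (x - m)\<^sup>2 * (4 * \<rho>) / a\<^sup>2"
  proof -
    have "(x + m)\<^sup>2 \<le> (2 * sqrt \<rho>)\<^sup>2" using power_mono[OF xm abs_ge_zero, of 2] by simp
    then have "(x + m)\<^sup>2 \<le> 4 * \<rho>" using rho by (simp add: power_mult_distrib)
    then show ?thesis using a by (intro divide_right_mono mult_left_mono) auto
  qed
  finally have s2: "s\<^sup>2 \<le> (x - m)\<^sup>2 * (4 * \<rho>) / a\<^sup>2" .
  have nd: "n * (x - m)\<^sup>2 \<le> 1"
  proof -
    have "(x - m)\<^sup>2 \<le> h\<^sup>2" using d by (metis abs_ge_zero power2_abs power_mono)
    then have "n * (x - m)\<^sup>2 \<le> n * h\<^sup>2" using n by (intro mult_left_mono) auto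
    then show ?thesis using nh by linarith
  qed
  have T1: "n / 2 * (s + ln (1 - s)) \<ge> - (4 * \<rho> / a\<^sup>2)"
  proof -
    have "n / 2 * (s + ln (1 - s)) \<ge> n / 2 * (- 2 * s\<^sup>2)" using L1 n by (intro mult_left_mono) auto
    moreover have "n * s\<^sup>2 \<le> n * ((x - m)\<^sup>2 * (4 * \<rho>) / a\<^sup>2)" using s2 n by (intro mult_left_mono) auto
    moreover have "n * ((x - m)\<^sup>2 * (4 * \<rho>) / a\<^sup>2) = (n * (x - m)\<^sup>2) * (4 * \<rho> / a\<^sup>2)" by simp
    moreover have "(n * (x - m)\<^sup>2) * (4 * \<rho> / a\<^sup>2) \<le> 1 * (4 * \<rho> / a\<^sup>2)"
      using nd rho a by (intro mult_right_mono) auto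
    ultimately show ?thesis by simp
  qed
  have T2: "n * (x - m)\<^sup>2 / (2 * a) \<le> 1 / (2 * a)" using nd a by (simp add: divide_right_mono)
  have T3: "3 * m * (x - m) / a \<ge> - (3 * sqrt \<rho> / a)"
  proof -
    have "\<bar>m * (x - m)\<bar> \<le> sqrt \<rho> * 1" unfolding abs_mult using mr' d h1 rho by (intro mult_mono) auto
    then have "3 * m * (x - m) \<ge> - (3 * sqrt \<rho>)" by (simp add: abs_le_iff)
    then show ?thesis using a by (simp add: divide_right_mono field_simps)
  qed
  show ?thesis using Phi_ident[OF x, of n] T1 T2 T3 unfolding s_def a_def by linarith
qed

lemma w_nonneg: "can_weight N \<mu> \<rho> x \<ge> 0"
  unfolding can_weight_def by simp

lemma w_m_pos: "can_weight N \<mu> \<rho> m > 0"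
  unfolding can_weight_def using a2_pos by simp

lemma W_upper:
  assumes N: "N \<ge> 3" and x: "\<bar>x\<bar> \<le> sqrt \<rho>"
  shows "can_weight N \<mu> \<rho> x \<le> can_weight N \<mu> \<rho> m * exp (6 * \<rho> / (\<rho> - m\<^sup>2))
            * exp (- ((real N - 3) / (2 * (\<rho> - m\<^sup>2))) * (x - m)\<^sup>2)"
proof (cases "x\<^sup>2 < \<rho>")
  case True
  have "exp (Phi (real N - 3) x) \<le> exp (- (real N - 3) * (x - m)\<^sup>2 / (2 * (\<rho> - m\<^sup>2)) + 6 * \<rho> / (\<rho> - m\<^sup>2))"
    by (subst exp_le_cancel_iff) (rule Phi_upper[OF True], use N in simp)
  also have "\<dots> = exp (6 * \<rho> / (\<rho> - m\<^sup>2) + (- ((real N - 3) / (2 * (\<rho> - m\<^sup>2))) * (x - m)\<^sup>2))"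
    using a2_pos by (simp add: field_simps)
  also have "\<dots> = exp (6 * \<rho> / (\<rho> - m\<^sup>2)) * exp (- ((real N - 3) / (2 * (\<rho> - m\<^sup>2))) * (x - m)\<^sup>2)"
    by (rule exp_add)
  finally show ?thesis unfolding w_repr[OF True N] using w_m_pos
    by (simp add: mult.assoc)
next
  case False
  then have "x\<^sup>2 = \<rho>"
    using power_mono[OF x abs_ge_zero, of 2] rho by simp
  then have "can_weight N \<mu> \<rho> x = 0" by (simp add: can_weight_def)
  then show ?thesis using w_m_pos[of N] by (simp add: less_imp_le)
qed

definition h0 :: real where
  "h0 = min 1 (min ((\<rho> - m\<^sup>2) / (4 * sqrt \<rho>)) ((sqrt \<rho> - \<bar>m\<bar>) / 2))"

definition E2 :: real where
  "E2 = exp (- (4 * \<rho> / (\<rho> - m\<^sup>2)\<^sup>2 + 1 / (2 * (\<rho> - m\<^sup>2)) + 3 * sqrt \<rho> / (\<rho> - m\<^sup>2)))"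

lemma h0_pos: "h0 > 0"
  unfolding h0_def using a2_pos mr rho by auto

lemma near_inside:
  assumes "\<bar>x - m\<bar> \<le> h" "h \<le> h0"
  shows "\<bar>x\<bar> < sqrt \<rho>" "x\<^sup>2 < \<rho>"
proof -
  have "h \<le> (sqrt \<rho> - \<bar>m\<bar>) / 2" using assms(2) unfolding h0_def by simp
  moreover have "\<bar>x\<bar> \<le> \<bar>x - m\<bar> + \<bar>m\<bar>" by (metis abs_triangle_ineq diff_add_cancel)
  ultimately show xr: "\<bar>x\<bar> < sqrt \<rho>" using assms(1) mr by (metis lin_aux)
  have "x\<^sup>2 < (sqrt \<rho>)\<^sup>2"
    using xr by (metis abs_ge_zero power2_abs power_strict_mono zero_less_numeral)
  then show "x\<^sup>2 < \<rho>" using rho by simp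
qed

lemma W_lower:
  assumes N: "N \<ge> 3" and d: "\<bar>x - m\<bar> \<le> h" and h: "h \<le> h0" and nh: "(real N - 3) * h\<^sup>2 \<le> 1"
  shows "can_weight N \<mu> \<rho> x \<ge> can_weight N \<mu> \<rho> m * E2"
proof -
  have x: "x\<^sup>2 < \<rho>" using near_inside[OF d h] by simp
  have "Phi (real N - 3) x \<ge> - (4 * \<rho> / (\<rho> - m\<^sup>2)\<^sup>2 + 1 / (2 * (\<rho> - m\<^sup>2)) + 3 * sqrt \<rho> / (\<rho> - m\<^sup>2))"
    by (rule Phi_lower[OF x _ d]) (use N h nh in \<open>auto simp: h0_def\<close>)
  then have "E2 \<le> exp (Phi (real N - 3) x)" unfolding E2_def by simp
  then show ?thesis unfolding w_repr[OF x N] using w_m_pos by simp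
qed

lemma w_cont:
  assumes N: "N > 3"
  shows "continuous_on {- sqrt \<rho>..sqrt \<rho>} (can_weight N \<mu> \<rho>)"
proof -
  have c1: "continuous_on {- sqrt \<rho>..sqrt \<rho>} (\<lambda>x. exp (- \<mu> * real N * x))"
    by (intro continuous_intros)
  have c2: "continuous_on {- sqrt \<rho>..sqrt \<rho>} (\<lambda>x. (\<rho> - x\<^sup>2) powr ((real N - 3) / 2))"
  proof (rule continuous_on_powr')
    show "continuous_on {- sqrt \<rho>..sqrt \<rho>} (\<lambda>x. \<rho> - x\<^sup>2)" by (intro continuous_intros)
    show "continuous_on {- sqrt \<rho>..sqrt \<rho>} (\<lambda>x. (real N - 3) / 2)" by (intro continuous_intros)
    show "\<forall>x\<in>{- sqrt \<rho>..sqrt \<rho>}. 0 \<le> \<rho> - x\<^sup>2 \<and> (\<rho> - x\<^sup>2 = 0 \<longrightarrow> 0 < (real N - 3) / 2)"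
    proof
      fix x assume "x \<in> {- sqrt \<rho>..sqrt \<rho>}"
      then have "\<bar>x\<bar> \<le> sqrt \<rho>" by auto
      then have "x\<^sup>2 \<le> (sqrt \<rho>)\<^sup>2" by (metis abs_ge_zero power2_abs power_mono)
      then show "0 \<le> \<rho> - x\<^sup>2 \<and> (\<rho> - x\<^sup>2 = 0 \<longrightarrow> 0 < (real N - 3) / 2)" using rho N by auto
    qed
  qed
  show ?thesis unfolding can_weight_def using continuous_on_mult[OF c1 c2] by simp
qed

definition E1 :: real where "E1 = exp (6 * \<rho> / (\<rho> - m\<^sup>2))"

lemma final_arith:
  fixes wm E1 E2 a n NN W T :: real
  assumes pos: "wm > 0" "E1 > 0" "E2 > 0" "a > 0" "n > 0" "NN > 0"
    and NN: "NN \<le> 4 * n"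
    and T: "T \<le> wm * E1 * (2 * a / n)" and W: "W \<ge> 2 * (1 / sqrt n) * wm * E2"
  shows "T \<le> (2 * E1 * a / E2) / sqrt NN * W"
proof -
  have sq: "sqrt NN \<le> 2 * sqrt n"
    using real_sqrt_le_mono[OF NN] by (simp add: real_sqrt_mult)
  have sn: "sqrt n > 0" "sqrt NN > 0" using pos by auto
  have nn: "n = sqrt n * sqrt n" using pos by simp
  have "(2 * E1 * a / E2) / sqrt NN * W \<ge> (2 * E1 * a / E2) / sqrt NN * (2 * (1 / sqrt n) * wm * E2)"
    using W pos sn by (intro mult_left_mono) auto
  moreover have "(2 * E1 * a / E2) / sqrt NN * (2 * (1 / sqrt n) * wm * E2) = 4 * E1 * a * wm / (sqrt NN * sqrt n)"
    using pos sn by (simp add: field_simps)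
  moreover have "4 * E1 * a * wm / (sqrt NN * sqrt n) \<ge> 4 * E1 * a * wm / (2 * sqrt n * sqrt n)"
    using sq pos sn by (intro divide_left_mono mult_right_mono) auto
  moreover have "4 * E1 * a * wm / (2 * sqrt n * sqrt n) = wm * E1 * (2 * a / n)"
    using pos sn by (subst (2) nn) (simp add: field_simps)
  ultimately show ?thesis using T by linarith
qed

lemma analytic:
  "\<exists>C N0. \<forall>N \<ge> N0. integral {- sqrt \<rho>..sqrt \<rho>} (can_weight N \<mu> \<rho>) > 0 \<and>
      integral {- sqrt \<rho>..sqrt \<rho>} (\<lambda>x. can_weight N \<mu> \<rho> x * \<bar>x - m\<bar>)
        \<le> C / sqrt N * integral {- sqrt \<rho>..sqrt \<rho>} (can_weight N \<mu> \<rho>)"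
proof (intro exI allI impI conjI)
  fix N :: nat
  assume N0: "N \<ge> nat \<lceil>1 / h0\<^sup>2\<rceil> + 5"
  define n where "n = real N - 3"
  define a where "a = \<rho> - m\<^sup>2"
  define h where "h = 1 / sqrt n"
  define c where "c = n / (2 * a)"
  define wm where "wm = can_weight N \<mu> \<rho> m"
  let ?I = "{- sqrt \<rho>..sqrt \<rho>}"
  let ?w = "can_weight N \<mu> \<rho>"
  have a: "a > 0" unfolding a_def using a2_pos .
  have h0p: "h0 > 0" using h0_pos .
  have Nr: "real N \<ge> 1 / h0\<^sup>2 + 5"
  proof -
    have "real N \<ge> real (nat \<lceil>1 / h0\<^sup>2\<rceil>) + 5" using N0 by linarith
    moreover have "real (nat \<lceil>1 / h0\<^sup>2\<rceil>) \<ge> 1 / h0\<^sup>2" by linarith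
    ultimately show ?thesis by linarith
  qed
  have n2: "n \<ge> 2" using Nr h0p unfolding n_def by (smt (verit) divide_nonneg_nonneg zero_le_power2)
  have nh0: "n \<ge> 1 / h0\<^sup>2" using Nr unfolding n_def by linarith
  have N3: "N > 3" using n2 unfolding n_def by linarith
  have hpos: "h > 0" using n2 unfolding h_def by simp
  have hh0: "h \<le> h0"
  proof -
    have "sqrt (1 / h0\<^sup>2) \<le> sqrt n" using nh0 by (rule real_sqrt_le_mono)
    then have "1 / h0 \<le> sqrt n" using h0p by (simp add: real_sqrt_divide)
    then show ?thesis unfolding h_def using h0p n2
      by (simp add: divide_le_eq mult.commute pos_divide_le_eq)
  qed
  have nh: "(real N - 3) * h\<^sup>2 \<le> 1" unfolding h_def n_def[symmetric] using n2 by (simp add: power_divide)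
  have wm: "wm > 0" unfolding wm_def using w_m_pos .
  have E1p: "E1 > 0" "E2 > 0" unfolding E1_def E2_def by auto
  have cont: "continuous_on ?I ?w" using w_cont[OF N3] .
  have mI: "- sqrt \<rho> \<le> m" "m \<le> sqrt \<rho>" using mr by auto
  have T: "integral ?I (\<lambda>x. ?w x * \<bar>x - m\<bar>) \<le> wm * E1 * (2 * a / n)"
  proof -
    have "integral ?I (\<lambda>x. ?w x * \<bar>x - m\<bar>) \<le> integral ?I (\<lambda>x. wm * E1 * (\<bar>x - m\<bar> * exp (- c * (x - m)\<^sup>2)))"
    proof (rule integral_le)
      show "(\<lambda>x. ?w x * \<bar>x - m\<bar>) integrable_on ?I"
        by (rule integrable_continuous_interval) (intro continuous_intros cont)
      show "(\<lambda>x. wm * E1 * (\<bar>x - m\<bar> * exp (- c * (x - m)\<^sup>2))) integrable_on ?I"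
        by (rule integrable_continuous_interval) (intro continuous_intros)
      fix x assume "x \<in> ?I"
      then have "\<bar>x\<bar> \<le> sqrt \<rho>" by auto
      from W_upper[OF _ this, of N] N3
      have wx: "?w x \<le> wm * E1 * exp (- c * (x - m)\<^sup>2)"
        unfolding wm_def E1_def c_def n_def a_def by simp
      then show "?w x * \<bar>x - m\<bar> \<le> wm * E1 * (\<bar>x - m\<bar> * exp (- c * (x - m)\<^sup>2))"
        using mult_right_mono[OF wx abs_ge_zero[of "x - m"]] by (simp add: algebra_simps)
    qed
    also have "\<dots> = wm * E1 * integral ?I (\<lambda>x. \<bar>x - m\<bar> * exp (- c * (x - m)\<^sup>2))"
      by simp
    also have "\<dots> \<le> wm * E1 * (1 / c)"
      using gauss_tail[of c "- sqrt \<rho>" m "sqrt \<rho>"] mI wm E1p n2 a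
      by (intro mult_left_mono) (auto simp: c_def)
    also have "1 / c = 2 * a / n" unfolding c_def by simp
    finally show ?thesis .
  qed
  have sub: "{m - h..m + h} \<subseteq> ?I"
  proof
    fix x assume "x \<in> {m - h..m + h}"
    then have "\<bar>x - m\<bar> \<le> h" by auto
    from near_inside(1)[OF this hh0] show "x \<in> ?I" by auto
  qed
  have W: "integral ?I ?w \<ge> 2 * (1 / sqrt n) * wm * E2"
  proof -
    have "integral {m - h..m + h} (\<lambda>x. wm * E2) \<le> integral {m - h..m + h} ?w"
    proof (rule integral_le)
      show "(\<lambda>x. wm * E2) integrable_on {m - h..m + h}" by (rule integrable_const_ivl)
      show "?w integrable_on {m - h..m + h}"
        by (rule integrable_continuous_interval) (rule continuous_on_subset[OF cont sub])
      fix x assume "x \<in> {m - h..m + h}"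
      then have "\<bar>x - m\<bar> \<le> h" by auto
      from W_lower[OF _ this hh0 nh] N3 show "wm * E2 \<le> ?w x" unfolding wm_def by simp
    qed
    also have "\<dots> \<le> integral ?I ?w"
    proof (rule integral_subset_le[OF sub])
      show "?w integrable_on {m - h..m + h}"
        by (rule integrable_continuous_interval) (rule continuous_on_subset[OF cont sub])
      show "?w integrable_on ?I" by (rule integrable_continuous_interval) (rule cont)
      show "\<forall>x\<in>?I. 0 \<le> ?w x" using w_nonneg by auto
    qed
    finally have "integral {m - h..m + h} (\<lambda>x. wm * E2) \<le> integral ?I ?w" .
    moreover have "integral {m - h..m + h} (\<lambda>x. wm * E2) = 2 * h * wm * E2"
      using hpos by simp
    ultimately show ?thesis unfolding h_def by simp
  qed
  show "integral ?I ?w > 0"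
    using W wm E1p n2 by (smt (verit) divide_pos_pos mult_pos_pos real_sqrt_gt_zero)
  show "integral ?I (\<lambda>x. ?w x * \<bar>x - m\<bar>) \<le> (2 * E1 * a / E2) / sqrt N * integral ?I ?w"
    by (rule final_arith[OF wm E1p(1) E1p(2) a _ _ _ T W]) (use n2 N3 in \<open>auto simp: n_def\<close>)
qed

end


lemma sqrt_diff_bound:
  fixes p q :: real assumes p: "p \<ge> 0" and q: "q > 0"
  shows "\<bar>sqrt p - sqrt q\<bar> \<le> \<bar>p - q\<bar> / sqrt q"
proof -
  have sq: "sqrt q > 0" using q by simp
  have sp: "sqrt p \<ge> 0" using p by simp
  have "(sqrt p - sqrt q) * (sqrt p + sqrt q) = p - q" using p q by (simp add: algebra_simps)
  then have e: "\<bar>sqrt p - sqrt q\<bar> * (sqrt p + sqrt q) = \<bar>p - q\<bar>" by (metis abs_mult abs_of_nonneg add_nonneg_nonneg sp sq less_imp_le)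
  have "\<bar>sqrt p - sqrt q\<bar> * sqrt q \<le> \<bar>sqrt p - sqrt q\<bar> * (sqrt p + sqrt q)"
    using sp by (intro mult_left_mono) auto
  then show ?thesis using e sq by (simp add: pos_le_divide_eq)
qed

theorem theorem4p25:
  fixes \<rho> m \<mu> :: real and f :: "real ^ 'k::finite \<Rightarrow> real"
  assumes "\<rho> > 0" and "\<bar>m\<bar> < sqrt \<rho>" and "\<mu> = - m / (\<rho> - m\<^sup>2)"
    and "bounded (range f)" and "1-lipschitz_on UNIV f"
  shows "\<exists>C N0. \<forall>N \<ge> N0. \<forall>\<iota> :: 'k \<Rightarrow> nat. inj \<iota> \<and> (\<forall>j. \<iota> j < N) \<longrightarrow>
           \<bar>mc_expect N m \<rho> (f \<circ> restrict_to \<iota>) - can_expect N \<mu> \<rho> (f \<circ> restrict_to \<iota>)\<bar>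
             \<le> C / sqrt (real N)"
proof -
  note rho = assms(1) and mr = assms(2) and mu = assms(3) and lip = assms(5)
  obtain Bf where Bf: "\<And>v. \<bar>f v\<bar> \<le> Bf"
    using assms(4) unfolding bounded_iff by auto
  obtain C N0 where CN: "\<And>N. N \<ge> N0 \<Longrightarrow> integral {- sqrt \<rho>..sqrt \<rho>} (can_weight N \<mu> \<rho>) > 0 \<and>
      integral {- sqrt \<rho>..sqrt \<rho>} (\<lambda>x. can_weight N \<mu> \<rho> x * \<bar>x - m\<bar>)
        \<le> C / sqrt N * integral {- sqrt \<rho>..sqrt \<rho>} (can_weight N \<mu> \<rho>)"
    using analytic[OF rho mr mu] by blast
  define a where "a = \<rho> - m\<^sup>2"
  have a: "a > 0" unfolding a_def using a2_pos[OF rho mr mu] .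
  define k where "k = real CARD('k)"
  define L where "L = k * (1 + 2 * sqrt \<rho> / sqrt a)"
  have L0: "L \<ge> 0" unfolding L_def k_def using a rho by simp
  show ?thesis
  proof (intro exI allI impI)
    fix N :: nat and \<iota> :: "'k \<Rightarrow> nat"
    assume N: "max N0 4 \<le> N" and \<iota>: "inj \<iota> \<and> (\<forall>j. \<iota> j < N)"
    have \<iota>N: "\<forall>j. \<iota> j < N" using \<iota> by auto
    have N3: "N > 3" using N by auto
    have CNN: "integral {- sqrt \<rho>..sqrt \<rho>} (can_weight N \<mu> \<rho>) > 0 \<and>
      integral {- sqrt \<rho>..sqrt \<rho>} (\<lambda>x. can_weight N \<mu> \<rho> x * \<bar>x - m\<bar>)
        \<le> C / sqrt N * integral {- sqrt \<rho>..sqrt \<rho>} (can_weight N \<mu> \<rho>)"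
      using CN N by auto
    let ?I = "{- sqrt \<rho>..sqrt \<rho>}"
    let ?w = "can_weight N \<mu> \<rho>"
    define g where "g x = mc_expect N x \<rho> (f \<circ> restrict_to \<iota>)" for x
    have glip: "\<bar>g x - g y\<bar> \<le> k * \<bar>x - y\<bar> + k * \<bar>sqrt (\<rho> - x\<^sup>2) - sqrt (\<rho> - y\<^sup>2)\<bar>" for x y
      unfolding g_def k_def by (rule mc_lip[OF Bf lip \<iota>N])
    have gcont: "continuous_on UNIV g"
    proof (rule continuous_at_imp_continuous_on, intro ballI)
      fix y :: real
      have lim: "((\<lambda>x. k * \<bar>x - y\<bar> + k * \<bar>sqrt (\<rho> - x\<^sup>2) - sqrt (\<rho> - y\<^sup>2)\<bar>) \<longlongrightarrow> 0) (at y)"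
      proof -
        have "((\<lambda>x. k * \<bar>x - y\<bar> + k * \<bar>sqrt (\<rho> - x\<^sup>2) - sqrt (\<rho> - y\<^sup>2)\<bar>) \<longlongrightarrow>
               k * \<bar>y - y\<bar> + k * \<bar>sqrt (\<rho> - y\<^sup>2) - sqrt (\<rho> - y\<^sup>2)\<bar>) (at y)"
          by (intro tendsto_intros)
        then show ?thesis by simp
      qed
      have "((\<lambda>x. g x - g y) \<longlongrightarrow> 0) (at y)"
        by (rule Lim_null_comparison[OF _ lim]) (use glip in auto)
      then show "isCont g y" unfolding isCont_def by (simp add: LIM_zero_iff)
    qed
    have wcont: "continuous_on ?I ?w" by (rule w_cont[OF rho mr mu N3])
    have wgcont: "continuous_on ?I (\<lambda>x. ?w x * g x)"
      by (intro continuous_on_mult wcont continuous_on_subset[OF gcont]) auto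
    have le: "- sqrt \<rho> \<le> sqrt \<rho>" using rho by simp
    have can: "can_expect N \<mu> \<rho> (f \<circ> restrict_to \<iota>) = integral ?I (\<lambda>x. ?w x * g x) / integral ?I ?w"
    proof -
      have "(LBINT x=- sqrt \<rho>..sqrt \<rho>. ?w x * g x) = integral ?I (\<lambda>x. ?w x * g x)"
        by (rule interval_integral_eq_integral[OF le borel_integrable_atLeastAtMost'[OF wgcont]])
      moreover have "(LBINT x=- sqrt \<rho>..sqrt \<rho>. ?w x) = integral ?I ?w"
        by (rule interval_integral_eq_integral[OF le borel_integrable_atLeastAtMost'[OF wcont]])
      ultimately show ?thesis unfolding can_expect_def g_def by simp
    qed
    define W where "W = integral ?I ?w"
    have Wpos: "W > 0" using CNN unfolding W_def by auto
    have iw: "?w integrable_on ?I" by (rule integrable_continuous_interval[OF wcont])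
    have iwg: "(\<lambda>x. ?w x * g x) integrable_on ?I" by (rule integrable_continuous_interval[OF wgcont])
    have iwc: "(\<lambda>x. ?w x * g m) integrable_on ?I"
      by (rule integrable_continuous_interval) (intro continuous_intros wcont)
    have iD: "(\<lambda>x. ?w x * g m - ?w x * g x) integrable_on ?I"
      using iwc iwg by (intro integrable_diff) auto
    have iT: "(\<lambda>x. L * (?w x * \<bar>x - m\<bar>)) integrable_on ?I"
      by (rule integrable_continuous_interval) (intro continuous_intros wcont)
    have diff: "g m - can_expect N \<mu> \<rho> (f \<circ> restrict_to \<iota>) = integral ?I (\<lambda>x. ?w x * g m - ?w x * g x) / W"
    proof -
      have "integral ?I (\<lambda>x. ?w x * g m - ?w x * g x) = integral ?I (\<lambda>x. ?w x * g m) - integral ?I (\<lambda>x. ?w x * g x)"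
        by (rule integral_diff) (use iwc iwg in auto)
      also have "integral ?I (\<lambda>x. ?w x * g m) = W * g m" unfolding W_def by simp
      finally show ?thesis unfolding can W_def[symmetric] using Wpos by (simp add: field_simps)
    qed
    have bnd: "\<bar>integral ?I (\<lambda>x. ?w x * g m - ?w x * g x)\<bar> \<le> integral ?I (\<lambda>x. L * (?w x * \<bar>x - m\<bar>))"
    proof -
      have "norm (integral ?I (\<lambda>x. ?w x * g m - ?w x * g x)) \<le> integral ?I (\<lambda>x. L * (?w x * \<bar>x - m\<bar>))"
      proof (rule Henstock_Kurzweil_Integration.integral_norm_bound_integral[OF iD iT])
        fix x assume x: "x \<in> ?I"
        then have xa: "\<bar>x\<bar> \<le> sqrt \<rho>" by auto
        have x2: "x\<^sup>2 \<le> \<rho>" using power_mono[OF xa abs_ge_zero, of 2] rho by simp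
        have m2: "\<bar>m\<bar> \<le> sqrt \<rho>" using mr by simp
        have "\<bar>sqrt (\<rho> - m\<^sup>2) - sqrt (\<rho> - x\<^sup>2)\<bar> = \<bar>sqrt (\<rho> - x\<^sup>2) - sqrt a\<bar>" unfolding a_def by simp
        also have "\<dots> \<le> \<bar>(\<rho> - x\<^sup>2) - a\<bar> / sqrt a" by (rule sqrt_diff_bound) (use x2 a in auto)
        also have "\<bar>(\<rho> - x\<^sup>2) - a\<bar> = \<bar>x - m\<bar> * \<bar>x + m\<bar>"
          unfolding a_def by (simp add: power2_eq_square abs_mult[symmetric] algebra_simps)
        also have "\<dots> \<le> \<bar>x - m\<bar> * (2 * sqrt \<rho>)"
          using xa m2 by (intro mult_left_mono) auto
        finally have sd: "\<bar>sqrt (\<rho> - m\<^sup>2) - sqrt (\<rho> - x\<^sup>2)\<bar> \<le> \<bar>x - m\<bar> * (2 * sqrt \<rho>) / sqrt a"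
          using a by (simp add: divide_right_mono)
        have "\<bar>g m - g x\<bar> \<le> k * \<bar>m - x\<bar> + k * \<bar>sqrt (\<rho> - m\<^sup>2) - sqrt (\<rho> - x\<^sup>2)\<bar>" by (rule glip)
        also have "\<dots> \<le> k * \<bar>x - m\<bar> + k * (\<bar>x - m\<bar> * (2 * sqrt \<rho>) / sqrt a)"
          using mult_left_mono[OF sd, of k] unfolding k_def by (simp add: abs_minus_commute)
        also have "\<dots> = L * \<bar>x - m\<bar>" unfolding L_def by (simp add: algebra_simps)
        finally have gx: "\<bar>g m - g x\<bar> \<le> L * \<bar>x - m\<bar>" .
        have "norm (?w x * g m - ?w x * g x) = ?w x * \<bar>g m - g x\<bar>"
          using w_nonneg[OF rho mr mu] by (simp add: right_diff_distrib[symmetric] abs_mult)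
        also have "\<dots> \<le> ?w x * (L * \<bar>x - m\<bar>)"
          using gx w_nonneg[OF rho mr mu] by (intro mult_left_mono) auto
        finally show "norm (?w x * g m - ?w x * g x) \<le> L * (?w x * \<bar>x - m\<bar>)" by (simp add: algebra_simps)
      qed
      then show ?thesis by simp
    qed
    also have "integral ?I (\<lambda>x. L * (?w x * \<bar>x - m\<bar>)) = L * integral ?I (\<lambda>x. ?w x * \<bar>x - m\<bar>)"
      by simp
    also have "\<dots> \<le> L * (C / sqrt N * W)"
      using CNN L0 unfolding W_def by (intro mult_left_mono) auto
    finally have "\<bar>integral ?I (\<lambda>x. ?w x * g m - ?w x * g x)\<bar> / W \<le> L * C / sqrt N"
      using Wpos by (simp add: pos_divide_le_eq field_simps)
    then show "\<bar>mc_expect N m \<rho> (f \<circ> restrict_to \<iota>) - can_expect N \<mu> \<rho> (f \<circ> restrict_to \<iota>)\<bar> \<le> L * C / sqrt (real N)"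
      using diff Wpos unfolding g_def by (simp add: abs_divide)
  qed
qed

end
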